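(* Let $Z$ be a fat point scheme in $\mathbb{P}^1\times\mathbb{P}^1$. Then $\alpha_Z^*\unrhd\beta_Z$.
   Context: $\mathbf{k}$ algebraically closed; a fat point scheme $Z$ in $\mathbb{P}^1\times\mathbb{P}^1$ is given by distinct points with positive multiplicities. With $\pi_1(\mathrm{Supp}\,Z)=\{R_1,\dots,R_r\}$, $\pi_2(\mathrm{Supp}\,Z)=\{Q_1,\dots,Q_t\}$ and $m_{ij}$ the multiplicity of $R_i\times Q_j$ ($0$ if absent): $l_i=\max_j m_{ij}$, $a_{i,k}=\sum_j(m_{ij}-k)_+$ ($0\le k\le l_i-1$), $\alpha_Z$ = all $a_{i,k}$ in non-increasing order; $l'_j=\max_i m_{ij}$, $b_{j,k}=\sum_i(m_{ij}-k)_+$ ($0\le k\le l'_j-1$), $\beta_Z$ = all $b_{j,k}$ in non-increasing order; $(n)_+=\max\{0,n\}$. Both are partitions of $\sum\binom{m_i+1}{2}$. The conjugate of a partition $\lambda=(\lambda_1\ge\dots\ge\lambda_n)$ is $\lambda^*=(\lambda^*_1,\dots,\lambda^*_{\lambda_1})$ with $\lambda^*_i=\#\{j:\lambda_j\ge i\}$. For partitions $\lambda,\delta$ of the same integer (the shorter padded with zeros), $\lambda\unrhd\delta$ means $\lambda_1+\dots+\lambda_i\ge\delta_1+\dots+\delta_i$ for all $i$. *)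

theory Defs
  imports Main "HOL-Library.Multiset"
begin

text \<open>A fat point scheme Z in P1 x P1 is recorded by its multiplicity function
  m :: 'a x 'b => nat (points of the first / second P1 factor of types 'a / 'b);
  Supp Z = points with positive multiplicity, required to be finite.\<close>

definition fat_point_scheme :: "('a \<times> 'b \<Rightarrow> nat) \<Rightarrow> bool" where
  "fat_point_scheme m \<longleftrightarrow> finite {p. 0 < m p}"

definition supp_fp :: "('a \<times> 'b \<Rightarrow> nat) \<Rightarrow> ('a \<times> 'b) set" where
  "supp_fp m = {p. 0 < m p}"

definition proj1_fp :: "('a \<times> 'b \<Rightarrow> nat) \<Rightarrow> 'a set" where
  "proj1_fp m = fst ` supp_fp m"

definition proj2_fp :: "('a \<times> 'b \<Rightarrow> nat) \<Rightarrow> 'b set" where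
  "proj2_fp m = snd ` supp_fp m"

text \<open>l_i and a_{i,k}; natural-number subtraction is exactly (n)_+.\<close>
definition l_fp :: "('a \<times> 'b \<Rightarrow> nat) \<Rightarrow> 'a \<Rightarrow> nat" where
  "l_fp m R = Max ((\<lambda>Q. m (R, Q)) ` proj2_fp m)"

definition a_fp :: "('a \<times> 'b \<Rightarrow> nat) \<Rightarrow> 'a \<Rightarrow> nat \<Rightarrow> nat" where
  "a_fp m R k = (\<Sum>Q\<in>proj2_fp m. m (R, Q) - k)"

definition l'_fp :: "('a \<times> 'b \<Rightarrow> nat) \<Rightarrow> 'b \<Rightarrow> nat" where
  "l'_fp m Q = Max ((\<lambda>R. m (R, Q)) ` proj1_fp m)"

definition b_fp :: "('a \<times> 'b \<Rightarrow> nat) \<Rightarrow> 'b \<Rightarrow> nat \<Rightarrow> nat" where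
  "b_fp m Q k = (\<Sum>R\<in>proj1_fp m. m (R, Q) - k)"

definition alpha_fp :: "('a \<times> 'b \<Rightarrow> nat) \<Rightarrow> nat list" where
  "alpha_fp m = rev (sorted_list_of_multiset
     (\<Sum>R\<in>proj1_fp m. image_mset (a_fp m R) (mset [0..<l_fp m R])))"

definition beta_fp :: "('a \<times> 'b \<Rightarrow> nat) \<Rightarrow> nat list" where
  "beta_fp m = rev (sorted_list_of_multiset
     (\<Sum>Q\<in>proj2_fp m. image_mset (b_fp m Q) (mset [0..<l'_fp m Q])))"

definition conj_part :: "nat list \<Rightarrow> nat list" where
  "conj_part lam = map (\<lambda>i. length (filter (\<lambda>x. i \<le> x) lam))
      [1..<Suc (if lam = [] then 0 else hd lam)]"

text \<open>Dominance order; take beyond the length amounts to padding with zeros.\<close>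
definition dominates :: "nat list \<Rightarrow> nat list \<Rightarrow> bool" where
  "dominates lam del \<longleftrightarrow> (\<forall>i. sum_list (take i del) \<le> sum_list (take i lam))"

end

theory Submission imports Defs begin

lemma filter_sum: "(\<Sum>t=1..n. length (filter (\<lambda>x. t \<le> x) xs)) = (\<Sum>x\<leftarrow>xs. min n x)"
proof (induction xs)
  case Nil then show ?case by simp
next
  case (Cons a xs)
  have "(\<Sum>t=1..n. length (filter (\<lambda>x. t \<le> x) (a#xs)))
     = (\<Sum>t=1..n. (if t \<le> a then 1 else 0) + length (filter (\<lambda>x. t \<le> x) xs))"
    by (rule sum.cong) auto
  also have "\<dots> = (\<Sum>t=1..n. (if t \<le> a then 1 else 0::nat)) + (\<Sum>t=1..n. length (filter (\<lambda>x. t \<le> x) xs))"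
    by (rule sum.distrib)
  also have "{1..n} \<inter> {t. t \<le> a} = {1..min n a}" by auto
  then have "(\<Sum>t=1..n. (if t \<le> a then 1 else 0::nat)) = min n a"
    by (simp add: sum.If_cases)
  finally show ?case using Cons by simp
qed

lemma conj_sum:
  assumes "\<forall>x\<in>set xs. x \<le> hd xs"
  shows "sum_list (take i (conj_part xs)) = (\<Sum>x\<leftarrow>xs. min i x)"
proof (cases "xs = []")
  case True then show ?thesis by (simp add: conj_part_def)
next
  case False
  define M where "M = hd xs"
  have tk: "take i [1..<Suc M] = [1..<Suc (min i M)]"
  proof (cases "i \<le> M")
    case True then show ?thesis using take_upt[of 1 i "Suc M"] by (simp del: upt_Suc add: min_def)
  next
    case False then show ?thesis by (simp add: min_def)
  qed
  have "take i (conj_part xs) = map (\<lambda>t. length (filter (\<lambda>x. t \<le> x) xs)) [1..<Suc (min i M)]"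
    using False unfolding conj_part_def M_def[symmetric] by (simp only: take_map tk if_False)
  then have "sum_list (take i (conj_part xs)) = (\<Sum>t=1..min i M. length (filter (\<lambda>x. t \<le> x) xs))"
    by (simp only: sum_set_upt_conv_sum_list_nat[symmetric] set_upt atLeastLessThanSuc_atLeastAtMost)
  also have "\<dots> = (\<Sum>x\<leftarrow>xs. min (min i M) x)" by (rule filter_sum)
  also have "\<dots> = (\<Sum>x\<leftarrow>xs. min i x)"
    using assms unfolding M_def by (intro arg_cong[where f=sum_list] map_cong) auto
  finally show ?thesis .
qed

lemma sub_image: "T \<subseteq># image_mset f A \<Longrightarrow> \<exists>B. B \<subseteq># A \<and> T = image_mset f B"
proof -
  assume "T \<subseteq># image_mset f A"
  then have "image_mset f A = T + (image_mset f A - T)" by simp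
  then obtain B C where "A = B + C" "T = image_mset f B" using image_mset_eq_plusD by blast
  then show ?thesis by (metis mset_subset_eq_add_left)
qed

lemma sub_mset_set:
  assumes "B \<subseteq># mset_set J" "finite J"
  shows "B = mset_set (set_mset B)"
proof (rule multiset_eqI)
  fix x
  have "count B x \<le> count (mset_set J) x" using assms(1) by (simp add: subseteq_mset_def)
  also have "\<dots> \<le> 1" using assms(2) by (simp add: count_mset_set')
  finally have c1: "count B x \<le> 1" .
  then show "count B x = count (mset_set (set_mset B)) x"
  proof (cases "x \<in># B")
    case True
    then have "0 < count B x" by simp
    then have "count B x = 1" using c1 by linarith
    then show ?thesis using True by (simp add: count_mset_set')
  next
    case False then show ?thesis by (simp add: count_mset_set' not_in_iff)
  qed
qed

lemma sorted_le_last: "sorted xs \<Longrightarrow> x \<in> set xs \<Longrightarrow> x \<le> last xs"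
proof (induction xs)
  case Nil then show ?case by simp
next
  case (Cons a xs) then show ?case
    by (cases "xs = []") auto
qed

lemma gale_ryser:
  fixes I :: "'i set" and J :: "'j set"
  assumes fI: "finite I" and fJ: "finite J"
    and r: "\<And>x. x \<in> I \<Longrightarrow> r x = card {j\<in>J. E x j}"
    and c: "\<And>j. j \<in> J \<Longrightarrow> c j = card {x\<in>I. E x j}"
  shows "dominates (conj_part (rev (sorted_list_of_multiset (image_mset r (mset_set I)))))
                   (rev (sorted_list_of_multiset (image_mset c (mset_set J))))"
  unfolding dominates_def
proof
  fix i
  define al where "al = rev (sorted_list_of_multiset (image_mset r (mset_set I)))"
  define be where "be = rev (sorted_list_of_multiset (image_mset c (mset_set J)))"
  have hd: "\<forall>x\<in>set al. x \<le> hd al"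
  proof
    fix x assume "x \<in> set al"
    then have "x \<in> set (sorted_list_of_multiset (image_mset r (mset_set I)))" by (simp add: al_def)
    then show "x \<le> hd al" unfolding al_def hd_rev
      by (rule sorted_le_last[OF sorted_sorted_list_of_multiset])
  qed
  have lhs: "sum_list (take i (conj_part al)) = (\<Sum>x\<in>I. min i (r x))"
  proof -
    have "sum_list (take i (conj_part al)) = (\<Sum>x\<leftarrow>al. min i x)" by (rule conj_sum[OF hd])
    also have "\<dots> = sum_mset (image_mset (min i) (mset al))" by (metis mset_map sum_mset_sum_list)
    also have "\<dots> = (\<Sum>x\<in>I. min i (r x))" by (simp add: al_def sum_unfold_sum_mset image_mset.compositionality comp_def)
    finally show ?thesis .
  qed
  have "mset (take i be) \<subseteq># mset be" by (metis append_take_drop_id mset_append mset_subset_eq_add_left)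
  also have "mset be = image_mset c (mset_set J)" by (simp add: be_def)
  finally obtain B where B: "B \<subseteq># mset_set J" "mset (take i be) = image_mset c B"
    using sub_image by blast
  define S where "S = set_mset B"
  have BS: "B = mset_set S" using sub_mset_set[OF B(1) fJ] S_def by simp
  have SJ: "S \<subseteq> J" using set_mset_mono[OF B(1)] fJ unfolding S_def by simp
  have fS: "finite S" using SJ fJ finite_subset by blast
  have cS: "card S \<le> i"
  proof -
    have "card S = size B" using BS fS by simp
    also have "\<dots> = length (take i be)" using B(2) by (metis size_image_mset size_mset)
    finally show ?thesis by simp
  qed
  have "sum_list (take i be) = sum_mset (image_mset c B)" using B(2) by (metis sum_mset_sum_list)
  also have "\<dots> = (\<Sum>j\<in>S. c j)" using BS by (simp add: sum_unfold_sum_mset)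
  also have "\<dots> = (\<Sum>j\<in>S. \<Sum>x\<in>I. if E x j then 1 else 0)"
    using SJ c fI by (intro sum.cong) (auto simp: sum.If_cases Int_def)
  also have "\<dots> = (\<Sum>x\<in>I. \<Sum>j\<in>S. if E x j then 1 else 0)" by (rule sum.swap)
  also have "\<dots> = (\<Sum>x\<in>I. card {j\<in>S. E x j})" using fS by (simp add: sum.If_cases Int_def)
  also have "\<dots> \<le> (\<Sum>x\<in>I. min i (r x))"
  proof (rule sum_mono)
    fix x assume x: "x \<in> I"
    have "card {j\<in>S. E x j} \<le> card S" using fS by (intro card_mono) auto
    moreover have "card {j\<in>S. E x j} \<le> card {j\<in>J. E x j}" using fJ SJ by (intro card_mono) auto
    ultimately show "card {j\<in>S. E x j} \<le> min i (r x)" using cS r[OF x] by simp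
  qed
  finally show "sum_list (take i be) \<le> sum_list (take i (conj_part al))" using lhs by simp
qed

lemma mset_Sigma:
  assumes "finite X"
  shows "(\<Sum>R\<in>X. image_mset (f R) (mset [0..<g R]))
       = image_mset (\<lambda>(R,k). f R k) (mset_set (SIGMA R:X. {0..<g R}))"
  using assms
proof (induction X rule: finite_induct)
  case empty then show ?case by simp
next
  case (insert x F)
  have eq: "(SIGMA R:insert x F. {0..<g R}) = Pair x ` {0..<g x} \<union> (SIGMA R:F. {0..<g R})" by auto
  have disj: "Pair x ` {0..<g x} \<inter> (SIGMA R:F. {0..<g R}) = {}" using insert(2) by auto
  have "mset_set (SIGMA R:insert x F. {0..<g R}) = mset_set (Pair x ` {0..<g x}) + mset_set (SIGMA R:F. {0..<g R})"
    unfolding eq using insert(1) disj by (intro mset_set_Union) auto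
  also have "mset_set (Pair x ` {0..<g x}) = image_mset (Pair x) (mset_set {0..<g x})"
    by (rule image_mset_mset_set[symmetric]) (simp add: inj_on_def)
  finally show ?case using insert by (simp add: image_mset.compositionality comp_def)
qed

theorem theorem3p16:
  fixes m :: "'a \<times> 'b \<Rightarrow> nat"
  assumes "fat_point_scheme m"
  shows "dominates (conj_part (alpha_fp m)) (beta_fp m)"
proof -
  define P1 where "P1 = proj1_fp m"
  define P2 where "P2 = proj2_fp m"
  have fs: "finite (supp_fp m)" using assms by (simp add: fat_point_scheme_def supp_fp_def)
  have f1: "finite P1" using fs by (simp add: P1_def proj1_fp_def)
  have f2: "finite P2" using fs by (simp add: P2_def proj2_fp_def)
  define I where "I = (SIGMA R:P1. {0..<l_fp m R})"
  define J where "J = (SIGMA Q:P2. {0..<l'_fp m Q})"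
  define E where "E = (\<lambda>(R::'a,k::nat) (Q::'b,k'). k + k' < m (R,Q))"
  have le1: "m (R,Q) \<le> l_fp m R" if "Q \<in> P2" for R Q
    unfolding l_fp_def P2_def[symmetric] using f2 that by (intro Max_ge) auto
  have le2: "m (R,Q) \<le> l'_fp m Q" if "R \<in> P1" for R Q
    unfolding l'_fp_def P1_def[symmetric] using f1 that by (intro Max_ge) auto
  have fI: "finite I" using f1 by (simp add: I_def)
  have fJ: "finite J" using f2 by (simp add: J_def)
  have r: "(\<lambda>(R,k). a_fp m R k) x = card {j\<in>J. E x j}" if "x \<in> I" for x
  proof -
    obtain R k where x: "x = (R,k)" "R \<in> P1" using \<open>x \<in> I\<close> by (auto simp: I_def)
    have lt: "b < l'_fp m Q" if "b < m (R,Q) - k" for b Q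
      using le2[OF x(2), of Q] that by linarith
    have "{j\<in>J. E x j} = (SIGMA Q:P2. {..<m (R,Q) - k})"
      using lt by (auto simp: J_def E_def x(1))
    then have "card {j\<in>J. E x j} = (\<Sum>Q\<in>P2. m (R,Q) - k)" using f2 by simp
    then show ?thesis by (simp add: x(1) a_fp_def P2_def)
  qed
  have c: "(\<lambda>(Q,k). b_fp m Q k) j = card {x\<in>I. E x j}" if "j \<in> J" for j
  proof -
    obtain Q k where j: "j = (Q,k)" "Q \<in> P2" using \<open>j \<in> J\<close> by (auto simp: J_def)
    have lt: "b < l_fp m R" if "b < m (R,Q) - k" for b R
      using le1[OF j(2), of R] that by linarith
    have "{x\<in>I. E x j} = (SIGMA R:P1. {..<m (R,Q) - k})"
      using lt by (auto simp: I_def E_def j(1))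
    then have "card {x\<in>I. E x j} = (\<Sum>R\<in>P1. m (R,Q) - k)" using f1 by simp
    then show ?thesis by (simp add: j(1) b_fp_def P1_def)
  qed
  have "alpha_fp m = rev (sorted_list_of_multiset (image_mset (\<lambda>(R,k). a_fp m R k) (mset_set I)))"
    unfolding alpha_fp_def I_def P1_def by (subst mset_Sigma[OF f1[unfolded P1_def]]) (rule refl)
  moreover have "beta_fp m = rev (sorted_list_of_multiset (image_mset (\<lambda>(Q,k). b_fp m Q k) (mset_set J)))"
    unfolding beta_fp_def J_def P2_def by (subst mset_Sigma[OF f2[unfolded P2_def]]) (rule refl)
  ultimately show ?thesis using gale_ryser[OF fI fJ r c] by simp
qed

end
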